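(* Let $[1,2,\dots,k]$ be a hierarchical-leadership flock and let $(x(t),v(t))$, $x_i,v_i\in\mathbb{R}^3$, solve for $t\ge0$ the Cucker–Smale system \[\dot x_i=v_i,\qquad \dot v_i=\sum_{j\in\mathcal{L}(i)}a_{ij}(x)(v_j-v_i),\qquad i=1,\dots,k,\] with $a_{ij}(x)=H/(1+|x_j-x_i|^2)^{\beta}$ for $j\in\mathcal{L}(i)$, where $H>0$ and $0<\beta<1/2$. Then there exists $B>0$, depending only on the initial configuration and the system parameters, such that \[\max_{1\le i,j\le k}|v_i(t)-v_j(t)|=O(e^{-Bt}),\qquad t>0.\]
   Context: A flock $[1,\dots,k]$ is under hierarchical leadership if $j\in\mathcal{L}(i)$ (agent $i$ is led by agent $j$) only if $j<i$, and every agent $i>1$ has a nonempty leader set $\mathcal{L}(i)$; agent $1$ has no leaders. *)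

theory Defs
  imports "HOL-Analysis.Analysis"
begin

text \<open>Hierarchical leadership flock [1,...,k]: L i is the leader set of agent i.\<close>
definition hierarchical_leadership :: "nat \<Rightarrow> (nat \<Rightarrow> nat set) \<Rightarrow> bool" where
  "hierarchical_leadership k L \<longleftrightarrow>
     (\<forall>i\<in>{1..k}. L i \<subseteq> {1..<i}) \<and> L 1 = {} \<and> (\<forall>i\<in>{2..k}. L i \<noteq> {})"

definition cs_weight :: "real \<Rightarrow> real \<Rightarrow> real^3 \<Rightarrow> real^3 \<Rightarrow> real" where
  "cs_weight H \<beta> xi xj = H / (1 + (norm (xj - xi))\<^sup>2) powr \<beta>"

end

theory Submission
  imports Defs
begin

lemma barrier:
  fixes \<psi> :: "real \<Rightarrow> real"
  assumes cont: "continuous_on {0..} \<psi>" and z: "\<psi> 0 \<le> 0"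
    and der: "\<And>t. t > 0 \<Longrightarrow> \<psi> t > 0 \<Longrightarrow> \<exists>D. (\<psi> has_real_derivative D) (at t) \<and> D \<le> 0"
    and t: "t \<ge> 0"
  shows "\<psi> t \<le> 0"
proof (rule ccontr)
  assume "\<not> \<psi> t \<le> 0"
  hence pt: "\<psi> t > 0" by simp
  define S where "S = {0..t} \<inter> \<psi> -` {..0}"
  have c2: "continuous_on {0..t} \<psi>" using cont by (rule continuous_on_subset) auto
  have cl: "closed S" unfolding S_def by (rule continuous_closed_preimage[OF c2]) auto
  have "0 \<in> S" using z t by (auto simp: S_def)
  hence ne: "S \<noteq> {}" by auto
  have bdd: "bdd_above S" unfolding S_def by (rule bdd_aboveI[of _ t]) auto
  define s where "s = Sup S"
  have sS: "s \<in> S" unfolding s_def by (rule closed_contains_Sup[OF ne bdd cl])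
  have ps: "\<psi> s \<le> 0" "0 \<le> s" "s \<le> t" using sS by (auto simp: S_def)
  have st: "s < t" using ps pt by (metis order.not_eq_order_implies_strict not_le)
  have pos: "\<psi> r > 0" if "s < r" "r \<le> t" for r
  proof (rule ccontr)
    assume "\<not> \<psi> r > 0"
    hence "r \<in> S" using that ps by (auto simp: S_def)
    hence "r \<le> s" unfolding s_def by (rule cSup_upper[OF _ bdd])
    thus False using that by simp
  qed
  have c3: "continuous_on {s..t} \<psi>" using ps by (intro continuous_on_subset[OF cont]) auto
  have "\<psi> differentiable (at x)" if "s < x" "x < t" for x
  proof -
    from that pos[of x] ps obtain D where "(\<psi> has_real_derivative D) (at x)" using der[of x] by force
    thus "\<psi> differentiable (at x)" using real_differentiable_def by blast
  qed
  from MVT[OF st c3 this] obtain l z where lz: "s < z" "z < t" "(\<psi> has_real_derivative l) (at z)"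
     "\<psi> t - \<psi> s = (t - s) * l" by blast
  obtain D where D: "(\<psi> has_real_derivative D) (at z)" "D \<le> 0" using der[of z] pos[of z] lz ps by force
  have "l = D" using DERIV_unique[OF lz(3) D(1)] .
  hence "(t - s) * l \<le> 0" using D st by (simp add: mult_nonneg_nonpos)
  thus False using lz(4) ps pt by linarith
qed

lemma norm_deriv:
  fixes u :: "real \<Rightarrow> 'a::real_inner"
  assumes d: "(u has_vector_derivative u') (at t)" and nz: "u t \<noteq> 0"
  shows "((\<lambda>s. norm (u s)) has_real_derivative (inner (sgn (u t)) u')) (at t)"
proof -
  have "((\<lambda>s. norm (u s)) has_derivative (\<lambda>h. inner (h *\<^sub>R u') (sgn (u t)))) (at t)"
    using has_derivative_compose[OF d[unfolded has_vector_derivative_def] has_derivative_norm[OF nz]] .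
  thus ?thesis unfolding has_field_derivative_def
    by (simp add: inner_commute mult.commute[of _ "u' \<bullet> sgn (u t)"] )
qed

lemma at_pos: "(t::real) > 0 \<Longrightarrow> at t within {0..} = at t"
  by (rule at_within_interior) auto

lemma cont_of_deriv:
  fixes u :: "real \<Rightarrow> 'a::real_normed_vector"
  assumes "\<And>t. t \<ge> 0 \<Longrightarrow> (u has_vector_derivative u' t) (at t within {0..})"
  shows "continuous_on {0..} u"
  using assms by (auto simp: continuous_on_eq_continuous_within intro: has_vector_derivative_continuous)

lemma cont_of_rderiv:
  fixes u :: "real \<Rightarrow> real"
  assumes "\<And>t. t \<ge> 0 \<Longrightarrow> (u has_real_derivative u' t) (at t within {0..})"
  shows "continuous_on {0..} u"
  using assms by (auto simp: continuous_on_eq_continuous_within intro: DERIV_continuous)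

lemma growth:
  fixes w z :: "real \<Rightarrow> 'a::real_inner" and G G' :: "real \<Rightarrow> real"
  assumes wd: "\<And>t. t \<ge> 0 \<Longrightarrow> (w has_vector_derivative z t) (at t within {0..})"
    and Gd: "\<And>t. t \<ge> 0 \<Longrightarrow> (G has_real_derivative G' t) (at t within {0..})"
    and zb: "\<And>t. t \<ge> 0 \<Longrightarrow> norm (z t) \<le> G' t" and t: "t \<ge> 0"
  shows "norm (w t - w 0) \<le> G t - G 0"
proof -
  let ?p = "\<lambda>t. norm (w t - w 0) - (G t - G 0)"
  have cw: "continuous_on {0..} w" by (rule cont_of_deriv[OF wd])
  have cG: "continuous_on {0..} G" by (rule cont_of_rderiv[OF Gd])
  have "continuous_on {0..} ?p" by (intro continuous_intros cw cG)
  moreover have "?p 0 \<le> 0" by simp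
  moreover have "\<exists>D. (?p has_real_derivative D) (at s) \<and> D \<le> 0" if s: "s > 0" "?p s > 0" for s
  proof -
    have Gm: "G 0 - G s \<le> 0"
    proof (rule barrier[of "\<lambda>s. G 0 - G s"])
      show "continuous_on {0..} (\<lambda>s. G 0 - G s)" by (intro continuous_intros cG)
      show "\<exists>D. ((\<lambda>s. G 0 - G s) has_real_derivative D) (at r) \<and> D \<le> 0" if "r > 0" for r
      proof -
        have "(G has_real_derivative G' r) (at r)" using Gd[of r] that at_pos[of r] by auto
        hence "((\<lambda>s. G 0 - G s) has_real_derivative (0 - G' r)) (at r)" by (intro DERIV_diff DERIV_const)
        moreover have "G' r \<ge> 0" using zb[of r] that norm_ge_zero[of "z r"] by linarith
        ultimately show ?thesis by force
      qed
    qed (use s in auto)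
    have nz: "w s - w 0 \<noteq> 0" using s(2) Gm by auto
    have d1: "((\<lambda>t. w t - w 0) has_vector_derivative z s) (at s)"
      using wd[of s] s at_pos[of s] by (auto intro!: derivative_eq_intros)
    have d2: "(G has_real_derivative G' s) (at s)" using Gd[of s] s at_pos[of s] by auto
    have "(?p has_real_derivative (inner (sgn (w s - w 0)) (z s) - (G' s - 0))) (at s)"
      by (intro DERIV_diff norm_deriv[OF d1 nz] d2 DERIV_const)
    moreover have "inner (sgn (w s - w 0)) (z s) \<le> norm (z s)"
      using Cauchy_Schwarz_ineq2[of "sgn (w s - w 0)" "z s"] nz by (simp add: norm_sgn)
    ultimately show ?thesis using zb[of s] s by force
  qed
  ultimately have "?p t \<le> 0" using barrier t by blast
  thus ?thesis by simp
qed

lemma decay: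
  fixes u f :: "real \<Rightarrow> 'a::real_inner" and a \<alpha> e g g' :: "real \<Rightarrow> real"
  assumes ud: "\<And>t. t \<ge> 0 \<Longrightarrow> (u has_vector_derivative (f t - a t *\<^sub>R u t)) (at t within {0..})"
    and aa: "\<And>t. t \<ge> 0 \<Longrightarrow> \<alpha> t \<le> a t" and a0: "\<And>t. t \<ge> 0 \<Longrightarrow> 0 \<le> \<alpha> t"
    and fb: "\<And>t. t \<ge> 0 \<Longrightarrow> norm (f t) \<le> a t * e t" and e0: "\<And>t. t \<ge> 0 \<Longrightarrow> 0 \<le> e t"
    and gd: "\<And>t. t \<ge> 0 \<Longrightarrow> (g has_real_derivative g' t) (at t within {0..})"
    and ge: "\<And>t. t \<ge> 0 \<Longrightarrow> 2 * e t \<le> g t"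
    and gg: "\<And>t. t \<ge> 0 \<Longrightarrow> - \<alpha> t * g t / 2 \<le> g' t"
    and u0: "norm (u 0) \<le> g 0" and t: "t \<ge> 0"
  shows "norm (u t) \<le> g t"
proof -
  let ?p = "\<lambda>t. norm (u t) - g t"
  have cw: "continuous_on {0..} u" by (rule cont_of_deriv[OF ud])
  have cG: "continuous_on {0..} g" by (rule cont_of_rderiv[OF gd])
  have "continuous_on {0..} ?p" by (intro continuous_intros cw cG)
  moreover have "?p 0 \<le> 0" using u0 by simp
  moreover have "\<exists>D. (?p has_real_derivative D) (at s) \<and> D \<le> 0" if s: "s > 0" "?p s > 0" for s
  proof -
    have s0: "s \<ge> 0" using s by simp
    have gs: "2 * e s \<le> g s" using ge[OF s0] .
    have es: "0 \<le> e s" using e0[OF s0] .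
    have nu: "norm (u s) > g s" using s by simp
    have nz: "u s \<noteq> 0" using nu gs es by auto
    have d1: "(u has_vector_derivative (f s - a s *\<^sub>R u s)) (at s)"
      using ud[OF s0] s at_pos[of s] by auto
    have d2: "(g has_real_derivative g' s) (at s)" using gd[OF s0] s at_pos[of s] by auto
    have "(?p has_real_derivative (inner (sgn (u s)) (f s - a s *\<^sub>R u s) - g' s)) (at s)"
      by (intro DERIV_diff norm_deriv[OF d1 nz] d2)
    moreover have "inner (sgn (u s)) (f s - a s *\<^sub>R u s) \<le> a s * e s - a s * norm (u s)"
    proof -
      have "inner (sgn (u s)) (f s - a s *\<^sub>R u s) = inner (sgn (u s)) (f s) - a s * norm (u s)"
        using nz by (simp add: inner_diff_right sgn_div_norm inner_commute power2_norm_eq_inner[symmetric] power2_eq_square)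
      moreover have "inner (sgn (u s)) (f s) \<le> norm (f s)"
        using Cauchy_Schwarz_ineq2[of "sgn (u s)" "f s"] nz by (simp add: norm_sgn)
      ultimately show ?thesis using fb[OF s0] by linarith
    qed
    moreover have "a s * e s - a s * norm (u s) \<le> g' s"
    proof -
      have h1: "norm (u s) - e s \<ge> g s / 2" using nu gs by linarith
      have h2: "g s / 2 \<ge> 0" using gs es by linarith
      have "a s * e s - a s * norm (u s) = - (a s * (norm (u s) - e s))" by (simp add: algebra_simps)
      also have "\<dots> \<le> - (\<alpha> s * (norm (u s) - e s))"
        using aa[OF s0] h1 h2 by (intro le_imp_neg_le mult_right_mono) auto
      also have "\<dots> \<le> - (\<alpha> s * (g s / 2))"
        using a0[OF s0] h1 by (intro le_imp_neg_le mult_left_mono) auto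
      also have "\<dots> \<le> g' s" using gg[OF s0] by simp
      finally show ?thesis .
    qed
    ultimately show ?thesis by force
  qed
  ultimately have "?p t \<le> 0" using barrier t by blast
  thus ?thesis by simp
qed


lemma exp_poly:
  fixes B T t :: real
  assumes B: "B > 0" and t: "t \<ge> 0"
  shows "(T+t)^2 \<le> (2*T^2 + 4/B^2) * exp (B*t)"
proof -
  have e1: "1 \<le> exp (B*t)" using B t by simp
  have "1 + B*t + (B*t)^2/2 \<le> exp (B*t)" using B t by (intro exp_lower_Taylor_quadratic) simp
  moreover have "0 \<le> B*t" using B t by simp
  ultimately have e2: "(B*t)^2/2 \<le> exp (B*t)" by linarith
  have "0 \<le> (T-t)^2" by simp
  hence "(T+t)^2 \<le> 2*T^2 + 2*t^2" by (simp add: power2_eq_square algebra_simps)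
  also have "2*t^2 = (4/B^2) * ((B*t)^2/2)" using B by (simp add: power_mult_distrib field_simps)
  also have "\<dots> \<le> (4/B^2) * exp (B*t)" using e2 B by (intro mult_left_mono) auto
  also have "2*T^2 \<le> 2*T^2 * exp (B*t)" using e1 by (simp add: mult_le_cancel_left1)
  finally show ?thesis by (simp add: algebra_simps)
qed

lemma key_powr:
  fixes H \<beta> Y0 V t W T :: real
  assumes H: "H > 0" and b: "0 < \<beta>" "\<beta> < 1/2" and Y0: "Y0 \<ge> 0" and V: "V \<ge> 0" and t: "t \<ge> 0"
    and W: "W = 1 + Y0 + V" and T: "T = max 1 ((4*W/H) powr (1/(1-2*\<beta>)))"
  shows "4 * (1+(Y0+V*t)^2) powr \<beta> \<le> H*(T+t)"
proof -
  define p where "p = 1 - 2*\<beta>"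
  have p: "0 < p" "p \<le> 1" using b by (auto simp: p_def)
  have W1: "W \<ge> 1" using W Y0 V by simp
  have T1: "T \<ge> 1" using T by simp
  have Z: "1+(Y0+V*t)^2 \<le> (W*(1+t))^2"
  proof -
    have "V*t \<le> V*t*1" by simp
    have "(W*(1+t)) = 1 + Y0 + V + (Y0 + V) * t + t" using W by (simp add: algebra_simps)
    moreover have "V \<le> V + V*t" using V t by simp
    moreover have "0 \<le> Y0 * t" using Y0 t by simp
    ultimately have "1 + (Y0 + V*t) \<le> W*(1+t)" using Y0 V t by (simp add: algebra_simps)
    hence "(1 + (Y0 + V*t))^2 \<le> (W*(1+t))^2" using Y0 V t by (intro power_mono) auto
    moreover have "1+(Y0+V*t)^2 \<le> (1 + (Y0 + V*t))^2" using Y0 V t by (simp add: power2_eq_square algebra_simps)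
    ultimately show ?thesis by linarith
  qed
  have "(1+(Y0+V*t)^2) powr \<beta> \<le> ((W*(1+t))^2) powr \<beta>"
    using b by (intro powr_mono2 Z) auto
  also have "((W*(1+t))^2) powr \<beta> = (W*(1+t)) powr (2*\<beta>)"
  proof -
    have "(W*(1+t))^2 = (W*(1+t)) powr 2" using W1 t by simp
    thus ?thesis by (simp add: powr_powr)
  qed
  also have "\<dots> = W powr (2*\<beta>) * (1+t) powr (2*\<beta>)" using W1 t by (simp add: powr_mult)
  also have "\<dots> \<le> W * (T+t) powr (2*\<beta>)"
  proof (intro mult_mono)
    show "W powr (2*\<beta>) \<le> W" using powr_mono[of "2*\<beta>" 1 W] b W1 by simp
    show "(1+t) powr (2*\<beta>) \<le> (T+t) powr (2*\<beta>)" using b t T1 by (intro powr_mono2) auto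
  qed (use W1 in auto)
  finally have A: "(1+(Y0+V*t)^2) powr \<beta> \<le> W * (T+t) powr (2*\<beta>)" .
  have Tp: "4*W/H \<le> T powr p"
  proof -
    have "4*W/H = ((4*W/H) powr (1/p)) powr p" using p H W1 by (simp add: powr_powr)
    also have "\<dots> \<le> T powr p" using p T by (intro powr_mono2) (auto simp: p_def)
    finally show ?thesis .
  qed
  also have "T powr p \<le> (T+t) powr p" using p t T1 by (intro powr_mono2) auto
  finally have "4*W \<le> H * (T+t) powr p" using H by (simp add: field_simps)
  hence "4*W * (T+t) powr (2*\<beta>) \<le> (H * (T+t) powr p) * (T+t) powr (2*\<beta>)"
    by (rule mult_right_mono) simp
  also have "\<dots> = H * ((T+t) powr p * (T+t) powr (2*\<beta>))" by simp
  also have "(T+t) powr p * (T+t) powr (2*\<beta>) = T+t"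
    using T1 t by (simp add: powr_add[symmetric] p_def)
  finally have "4*W * (T+t) powr (2*\<beta>) \<le> H * (T+t)" .
  thus ?thesis using A by linarith
qed



lemma alg1: "X \<noteq> 0 \<Longrightarrow> - (M * (of_nat 2 * X^(2-1) * (0+1))) / (X^2 * X^2) = - 2 * M / X^3" for X M :: real
  by (simp add: power2_eq_square power3_eq_cube field_simps)
lemma gd3_gen: "T \<ge> 1 \<Longrightarrow> t \<ge> 0 \<Longrightarrow> ((\<lambda>t. M / (T+t)^2) has_real_derivative (- 2 * M / (T+t)^3)) (at t within {0..})"
  for T t M :: real
proof -
  assume a: "T \<ge> 1" "t \<ge> 0"
  have nz: "T + t \<noteq> 0" using a by simp
  have "((\<lambda>t. M / (T+t)^2) has_real_derivative (- (M * (of_nat 2 * (T+t)^(2-1) * (0+1))) / ((T+t)^2 * (T+t)^2))) (at t within {0..})"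
    by (rule derivative_eq_intros refl | simp add: nz)+
  thus ?thesis by (simp only: alg1[OF nz])
qed
lemma alg2: "X \<noteq> 0 \<Longrightarrow> - (0 * X - M * (0 + 1)) / (X * X) = M / X^2" for X M :: real
  by (simp add: power2_eq_square)
lemma gd3b: "T \<ge> 1 \<Longrightarrow> s \<ge> 0 \<Longrightarrow> B > 0 \<Longrightarrow> ((\<lambda>t. - M/(T+t) - C/B * exp (-B*t)) has_real_derivative (M/(T+s)^2 + C * exp (-B * s))) (at s within {0..})"
  for T s M B C :: real
proof -
  assume a: "T \<ge> 1" "s \<ge> 0" "B > 0"
  have nz: "T + s \<noteq> 0" using a by simp
  have "((\<lambda>t. - M/(T+t)) has_real_derivative (M/(T+s)^2)) (at s within {0..})"
  proof -
    have "((\<lambda>t. - (M/(T+t))) has_real_derivative - ((0 * (T+s) - M * (0 + 1)) / ((T+s) * (T+s)))) (at s within {0..})"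
      by (rule derivative_eq_intros refl | simp add: nz)+
    moreover have "(T+s) * (T+s) = (T+s)^2" by (simp add: power2_eq_square)
    ultimately show ?thesis by simp
  qed
  moreover have "((\<lambda>t. C/B * exp (-B*t)) has_real_derivative (- C * exp (-B * s))) (at s within {0..})"
  proof -
    have "((\<lambda>t. C/B * exp (-B*t)) has_real_derivative (C/B * (exp (-B* s) * (- B * 1)))) (at s within {0..})"
      by ((rule derivative_eq_intros refl)+, simp add: algebra_simps)
    thus ?thesis using a by simp
  qed
  ultimately show ?thesis using DERIV_diff by fastforce
qed


lemma alg3: "X > 0 \<Longrightarrow> P > 0 \<Longrightarrow> 4*P*M \<le> H*X*M \<Longrightarrow> 2*M/X^3 \<le> (H/P)*(M/X^2)/2" for X P M H :: real
proof -
  assume a: "X > 0" "P > 0" "4*P*M \<le> H*X*M"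
  have "2*M/X^3 = (4*P*M)/(2*P*X^3)" using a by (simp add: field_simps)
  also have "\<dots> \<le> (H*X*M)/(2*P*X^3)" using a by (intro divide_right_mono) auto
  also have "\<dots> = (H/P)*(M/X^2)/2" using a by (simp add: field_simps power2_eq_square power3_eq_cube)
  finally show ?thesis .
qed

lemma pw_pos: "0 < (1 + (s::real)^2) powr b"
proof -
  have "0 < 1 + s^2" by (simp add: add_pos_nonneg)
  thus ?thesis by simp
qed

lemma step:
  fixes n :: nat and L :: "nat \<Rightarrow> nat set" and H \<beta> C B :: real
    and x v :: "nat \<Rightarrow> real \<Rightarrow> real^3"
  assumes H: "H > 0" and beta: "0 < \<beta>" "\<beta> < 1/2"
    and Ln: "L n \<subseteq> {1..<n}" "L n \<noteq> {}"
    and xdot: "\<And>i t. i \<in> {1..n} \<Longrightarrow> t \<ge> 0 \<Longrightarrow> (x i has_vector_derivative v i t) (at t within {0..})"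
    and vdotn: "\<And>t. t \<ge> 0 \<Longrightarrow> (v n has_vector_derivative
                    (\<Sum>j\<in>L n. cs_weight H \<beta> (x n t) (x j t) *\<^sub>R (v j t - v n t))) (at t within {0..})"
    and C: "C \<ge> 0" and B: "B > 0"
    and IH: "\<And>j t. j \<in> {1..<n} \<Longrightarrow> t \<ge> 0 \<Longrightarrow> norm (v j t - v 1 0) \<le> C * exp (-B*t)"
  shows "\<exists>M\<ge>0. \<exists>\<gamma>>0. \<forall>t\<ge>0. norm (v n t - v 1 0) \<le> M * exp (-\<gamma>*t)"
proof -
  obtain j0 where j0: "j0 \<in> L n" using Ln by auto
  have j0n: "j0 \<in> {1..<n}" using j0 Ln by auto
  have fin: "finite (L n)" by (meson Ln(1) finite_atLeastLessThan finite_subset)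
  define w where "w j t = cs_weight H \<beta> (x n t) (x j t)" for j t
  have w_eq: "w j t = H / (1 + (norm (x j t - x n t))^2) powr \<beta>" for j t
    unfolding w_def cs_weight_def ..
  have w0: "w j t \<ge> 0" for j t unfolding w_eq using H by simp
  define a where "a t = (\<Sum>j\<in>L n. w j t)" for t
  define f where "f t = (\<Sum>j\<in>L n. w j t *\<^sub>R (v j t - v 1 0))" for t
  define u where "u t = v n t - v 1 0" for t
  define e where "e t = C * exp (-B*t)" for t
  have a0: "a t \<ge> 0" for t unfolding a_def by (intro sum_nonneg w0)
  have e0: "e t \<ge> 0" for t unfolding e_def using C by simp
  have eC: "e t \<le> C" if "t \<ge> 0" for t
  proof -
    have "exp (-B*t) \<le> 1" using B that by simp
    thus ?thesis unfolding e_def using C by (metis mult_left_mono mult.right_neutral)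
  qed
  have ud: "(u has_vector_derivative (f t - a t *\<^sub>R u t)) (at t within {0..})" if t: "t \<ge> 0" for t
  proof -
    have "(\<Sum>j\<in>L n. w j t *\<^sub>R (v j t - v n t)) = (\<Sum>j\<in>L n. w j t *\<^sub>R (v j t - v 1 0) - w j t *\<^sub>R u t)"
      by (rule sum.cong) (auto simp: u_def algebra_simps)
    also have "\<dots> = f t - a t *\<^sub>R u t" by (simp add: f_def a_def sum_subtractf scaleR_sum_left)
    finally have eq: "(\<Sum>j\<in>L n. w j t *\<^sub>R (v j t - v n t)) = f t - a t *\<^sub>R u t" .
    have "((\<lambda>t. v n t - v 1 0) has_vector_derivative ((\<Sum>j\<in>L n. w j t *\<^sub>R (v j t - v n t)) - 0)) (at t within {0..})"
      using has_vector_derivative_diff[OF vdotn[OF t] has_vector_derivative_const[of "v 1 0"]]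
      by (simp add: w_def)
    thus ?thesis using eq by (simp add: u_def[abs_def])
  qed
  have fb: "norm (f t) \<le> a t * e t" if t: "t \<ge> 0" for t
  proof -
    have "norm (f t) \<le> (\<Sum>j\<in>L n. norm (w j t *\<^sub>R (v j t - v 1 0)))" unfolding f_def by (rule norm_sum)
    also have "\<dots> \<le> (\<Sum>j\<in>L n. w j t * e t)"
    proof (rule sum_mono)
      fix j assume "j \<in> L n"
      hence "norm (v j t - v 1 0) \<le> e t" using IH[of j t] Ln t by (auto simp: e_def)
      thus "norm (w j t *\<^sub>R (v j t - v 1 0)) \<le> w j t * e t" using w0[of j t] by (simp add: mult_left_mono)
    qed
    also have "\<dots> = a t * e t" by (simp add: a_def sum_distrib_right)
    finally show ?thesis .
  qed
  have vj0: "norm (v j0 t - v 1 0) \<le> e t" if "t \<ge> 0" for t using IH[OF j0n that] by (simp add: e_def)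
  define R where "R = max (norm (u 0)) (2*C)"
  have s1: "norm (u t) \<le> R" if t: "t \<ge> 0" for t
  proof (rule decay[where u=u and f=f and a=a and \<alpha>="\<lambda>_. 0" and e=e and g="\<lambda>_. R" and g'="\<lambda>_. 0", OF ud _ _ fb e0 _ _ _ _ t])
    show "\<And>t. ((\<lambda>_. R) has_real_derivative 0) (at t within {0..})" by (rule DERIV_const)
    show "2 * e s \<le> R" if "s \<ge> 0" for s using eC[OF that] by (simp add: R_def)
  qed (auto simp: a0 R_def)
  define y where "y t = x n t - x j0 t" for t
  define V where "V = R + C"
  define Y0 where "Y0 = norm (y 0)"
  have n1: "n \<in> {1..n}" and j01: "j0 \<in> {1..n}" using j0n by auto
  have yd: "(y has_vector_derivative (v n t - v j0 t)) (at t within {0..})" if "t \<ge> 0" for t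
    unfolding y_def[abs_def] using xdot[OF n1 that] xdot[OF j01 that] by (rule has_vector_derivative_diff)
  have vnj: "norm (v n t - v j0 t) \<le> norm (u t) + e t" if "t \<ge> 0" for t
  proof -
    have "v n t - v j0 t = u t - (v j0 t - v 1 0)" by (simp add: u_def)
    hence "norm (v n t - v j0 t) \<le> norm (u t) + norm (v j0 t - v 1 0)" by (metis norm_triangle_ineq4)
    thus ?thesis using vj0[OF that] by linarith
  qed
  have s2: "norm (y t) \<le> Y0 + V*t" if t: "t \<ge> 0" for t
  proof -
    have "norm (y t - y 0) \<le> V*t - V*0"
    proof (rule growth[where G="\<lambda>t. V*t" and G'="\<lambda>_. V", OF yd _ _ t])
      show "((\<lambda>t. V*t) has_real_derivative V) (at s within {0..})" for s
        by (auto intro!: derivative_eq_intros)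
      show "norm (v n s - v j0 s) \<le> V" if "s \<ge> 0" for s
        using vnj[OF that] s1[OF that] eC[OF that] by (simp add: V_def)
    qed auto
    hence "norm (y t) - norm (y 0) \<le> V*t" by (metis norm_triangle_ineq2 order_trans diff_zero mult_zero_right)
    thus ?thesis by (simp add: Y0_def)
  qed
  have V0: "V \<ge> 0" and Y00: "Y0 \<ge> 0" using C by (auto simp: V_def R_def Y0_def)
  have wlow: "w j0 t \<ge> H / (1 + (Y0 + V*t)^2) powr \<beta>" if t: "t \<ge> 0" for t
  proof -
    have "norm (x j0 t - x n t) = norm (y t)" by (simp add: y_def norm_minus_commute)
    hence "(1 + (norm (x j0 t - x n t))^2) powr \<beta> \<le> (1 + (Y0 + V*t)^2) powr \<beta>"
      using s2[OF t] beta by (intro powr_mono2) (auto intro!: power_mono)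
    thus ?thesis unfolding w_eq using H pw_pos by (intro divide_left_mono) auto
  qed
  have aw: "w j0 t \<le> a t" for t unfolding a_def by (rule member_le_sum[OF j0 _ fin]) (rule w0)
  define \<alpha>1 where "\<alpha>1 t = H / (1 + (Y0 + V*t)^2) powr \<beta>" for t
  have al1: "\<alpha>1 t \<le> a t" if "t \<ge> 0" for t using wlow[OF that] aw[of t] by (simp add: \<alpha>1_def)
  have al10: "\<alpha>1 t \<ge> 0" for t using H by (simp add: \<alpha>1_def)
  define W where "W = 1 + Y0 + V"
  define T where "T = max 1 ((4*W/H) powr (1/(1-2*\<beta>)))"
  define K where "K = 2*T^2 + 4/B^2"
  define M where "M = max (2*C*K) (norm (u 0) * T^2)"
  have T1: "T \<ge> 1" by (simp add: T_def)
  have M0: "M \<ge> 0" unfolding M_def by (rule max.coboundedI2) simp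
  have gd3: "((\<lambda>t. M / (T+t)^2) has_real_derivative (- 2 * M / (T+t)^3)) (at t within {0..})"
    if "t \<ge> 0" for t using gd3_gen[OF T1 that] .
  have s3: "norm (u t) \<le> M / (T+t)^2" if t: "t \<ge> 0" for t
  proof (rule decay[where u=u and f=f and a=a and \<alpha>=\<alpha>1 and e=e, OF ud al1 al10 fb e0 gd3 _ _ _ t])
    show "2 * e s \<le> M / (T+s)^2" if s: "s \<ge> 0" for s
    proof -
      have "(T+s)^2 \<le> K * exp (B* s)" using exp_poly[OF B s, of T] by (simp add: K_def)
      hence "(T+s)^2 * exp (-B* s) \<le> K * exp (B* s) * exp (-B* s)" by (simp add: mult_right_mono)
      also have "\<dots> = K" by (simp add: exp_minus[symmetric] mult.assoc exp_add[symmetric])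
      finally have "2*C*((T+s)^2 * exp (-B* s)) \<le> 2*C*K" using C by (intro mult_left_mono) auto
      hence "2 * e s * (T+s)^2 \<le> M" unfolding e_def M_def by (simp add: ac_simps)
      moreover have "(T+s)^2 > 0" using T1 s by simp
      ultimately show ?thesis by (simp add: field_simps)
    qed
    show "- \<alpha>1 s * (M / (T+s)^2) / 2 \<le> - 2 * M / (T+s)^3" if s: "s \<ge> 0" for s
    proof -
      define P where "P = (1 + (Y0 + V* s)^2) powr \<beta>"
      have P0: "P > 0" unfolding P_def by (rule pw_pos)
      have k: "4 * P \<le> H*(T+s)" unfolding P_def
        by (rule key_powr[OF H beta Y00 V0 s W_def T_def])
      have Ts: "T + s > 0" using T1 s by simp
      have "4 * P * M \<le> H*(T+s) * M" using k M0 by (rule mult_right_mono)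
      hence "2 * M / (T+s)^3 \<le> (H/P) * (M / (T+s)^2) / 2" using P0 Ts
        by (intro alg3) auto
      thus ?thesis by (simp add: \<alpha>1_def P_def)
    qed
    show "norm (u 0) \<le> M / (T+0)^2" using T1 by (simp add: M_def field_simps)
  qed
  define Y where "Y = Y0 + M/T + C/B"
  have s3b: "norm (y t) \<le> Y" if t: "t \<ge> 0" for t
  proof -
    define G where "G t = - M/(T+t) - C/B * exp (-B*t)" for t
    have "norm (y t - y 0) \<le> G t - G 0"
    proof (rule growth[where G=G and G'="\<lambda>t. M/(T+t)^2 + C * exp (-B*t)", OF yd _ _ t])
      show "(G has_real_derivative (M/(T+s)^2 + C * exp (-B* s))) (at s within {0..})" if "s \<ge> 0" for s
        using gd3b[OF T1 that B, of M C] by (simp add: G_def[abs_def])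
      show "norm (v n s - v j0 s) \<le> M/(T+s)^2 + C * exp (-B* s)" if "s \<ge> 0" for s
        using vnj[OF that] s3[OF that] by (simp add: e_def)
    qed auto
    moreover have "G t \<le> 0"
    proof -
      have "0 \<le> M/(T+t)" using M0 T1 t by simp
      moreover have "0 \<le> C/B * exp (-B*t)" using C B by simp
      ultimately show ?thesis unfolding G_def by linarith
    qed
    moreover have "- G 0 = M/T + C/B" by (simp add: G_def)
    ultimately have "norm (y t - y 0) \<le> M/T + C/B" by linarith
    hence "norm (y t) - norm (y 0) \<le> M/T + C/B" by (metis norm_triangle_ineq2 order_trans)
    thus ?thesis by (simp add: Y_def Y0_def)
  qed
  define \<alpha>0 where "\<alpha>0 = H / (1 + Y^2) powr \<beta>"
  have al0: "\<alpha>0 > 0" unfolding \<alpha>0_def using H pw_pos by simp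
  have Y0': "Y \<ge> 0" unfolding Y_def using Y00 M0 T1 C B by simp
  have w4: "\<alpha>0 \<le> a t" if t: "t \<ge> 0" for t
  proof -
    have "norm (x j0 t - x n t) = norm (y t)" by (simp add: y_def norm_minus_commute)
    hence "(1 + (norm (x j0 t - x n t))^2) powr \<beta> \<le> (1 + Y^2) powr \<beta>"
      using s3b[OF t] beta by (intro powr_mono2) (auto intro!: power_mono)
    hence "\<alpha>0 \<le> w j0 t" unfolding w_eq \<alpha>0_def using H pw_pos by (intro divide_left_mono) auto
    thus ?thesis using aw[of t] by simp
  qed
  define \<gamma> where "\<gamma> = min B (\<alpha>0/2)"
  define M2 where "M2 = max (norm (u 0)) (2*C)"
  have ga: "\<gamma> > 0" using B al0 by (simp add: \<gamma>_def)
  have M20: "M2 \<ge> 0" unfolding M2_def by (rule max.coboundedI1) simp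
  have s4: "norm (u t) \<le> M2 * exp (-\<gamma>*t)" if t: "t \<ge> 0" for t
  proof (rule decay[where u=u and f=f and a=a and \<alpha>="\<lambda>_. \<alpha>0" and e=e and g="\<lambda>t. M2 * exp (-\<gamma>*t)"
         and g'="\<lambda>t. M2 * (exp (-\<gamma>*t) * (-\<gamma>))", OF ud w4 _ fb e0 _ _ _ _ t])
    show "((\<lambda>t. M2 * exp (-\<gamma>*t)) has_real_derivative M2 * (exp (-\<gamma>* s) * (-\<gamma>))) (at s within {0..})" for s
      by (auto intro!: derivative_eq_intros)
    show "2 * e s \<le> M2 * exp (-\<gamma>* s)" if s: "s \<ge> 0" for s
    proof -
      have "exp (-B* s) \<le> exp (-\<gamma>* s)" using s by (simp add: \<gamma>_def mult_right_mono)
      moreover have "2*C \<le> M2" by (simp add: M2_def)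
      ultimately have "2 * C * exp (-B * s) \<le> M2 * exp (-\<gamma> * s)" using M20 by (intro mult_mono) auto
      thus ?thesis unfolding e_def by simp
    qed
    show "- \<alpha>0 * (M2 * exp (-\<gamma>* s)) / 2 \<le> M2 * (exp (-\<gamma>* s) * (-\<gamma>))" for s
    proof -
      have "\<gamma> \<le> \<alpha>0/2" by (simp add: \<gamma>_def)
      hence "\<gamma> * (M2 * exp (-\<gamma>* s)) \<le> \<alpha>0/2 * (M2 * exp (-\<gamma>* s))" using M20 by (intro mult_right_mono) auto
      thus ?thesis by (simp add: algebra_simps)
    qed
  qed (use al0 in \<open>auto simp: M2_def\<close>)
  show ?thesis
  proof (rule exI[of _ M2], intro conjI, rule M20, rule exI[of _ \<gamma>], intro conjI allI impI, rule ga)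
    fix t :: real assume "0 \<le> t"
    thus "norm (v n t - v 1 0) \<le> M2 * exp (-\<gamma>*t)" using s4[of t] by (simp add: u_def)
  qed
qed

lemma expbound:
  fixes C C' B B' t :: real
  assumes "0 \<le> C" "C \<le> C'" "B' \<le> B" "t \<ge> 0"
  shows "C * exp (-B*t) \<le> C' * exp (-B'*t)"
proof -
  have "-B*t \<le> -B'*t" using assms by (simp add: mult_right_mono)
  hence "exp (-B*t) \<le> exp (-B'*t)" by simp
  thus ?thesis using assms by (intro mult_mono) auto
qed

theorem theorem5:
  fixes k :: nat and L :: "nat \<Rightarrow> nat set" and H \<beta> :: real
    and x v :: "nat \<Rightarrow> real \<Rightarrow> real^3"
  assumes hier: "hierarchical_leadership k L"
    and H: "H > 0" and beta: "0 < \<beta>" "\<beta> < 1/2"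
    and xdot: "\<And>i t. i \<in> {1..k} \<Longrightarrow> t \<ge> 0 \<Longrightarrow>
                 (x i has_vector_derivative v i t) (at t within {0..})"
    and vdot: "\<And>i t. i \<in> {1..k} \<Longrightarrow> t \<ge> 0 \<Longrightarrow>
                 (v i has_vector_derivative
                    (\<Sum>j\<in>L i. cs_weight H \<beta> (x i t) (x j t) *\<^sub>R (v j t - v i t)))
                 (at t within {0..})"
  shows "\<exists>B>0. \<exists>C. \<forall>t>0. (\<forall>i\<in>{1..k}. \<forall>j\<in>{1..k}. norm (v i t - v j t) \<le> C * exp (- B * t))"
proof -
  have hL: "\<And>i. i\<in>{1..k} \<Longrightarrow> L i \<subseteq> {1..<i}" "L 1 = {}" "\<And>i. i\<in>{2..k} \<Longrightarrow> L i \<noteq> {}"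
    using hier unfolding hierarchical_leadership_def by auto
  have Q: "\<exists>C\<ge>0. \<exists>B>0. \<forall>j\<in>{1..i}. \<forall>t\<ge>0. norm (v j t - v 1 0) \<le> C * exp (-B*t)" if "i \<le> k" for i
    using that
  proof (induction i)
    case 0
    have "(0::real) \<ge> 0 \<and> (1::real) > 0 \<and> (\<forall>j\<in>{1..0::nat}. \<forall>t\<ge>0. norm (v j t - v 1 0) \<le> 0 * exp (-1*t))"
      by simp
    thus ?case by blast
  next
    case (Suc i)
    then obtain C B where CB: "C \<ge> 0" "B > 0"
      "\<And>j t. j\<in>{1..i} \<Longrightarrow> t \<ge> 0 \<Longrightarrow> norm (v j t - v 1 0) \<le> C * exp (-B*t)" by auto
    show ?case
    proof (cases "i = 0")
      case True
      have k1: "1 \<in> {1..k}" using Suc.prems True by auto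
      have d1: "(v 1 has_vector_derivative 0) (at t within {0..})" if "t \<ge> 0" for t
        using vdot[OF k1 that] hL(2) by simp
      have v1c: "norm (v 1 t - v 1 0) \<le> 0" if "t \<ge> 0" for t
      proof -
        have z: "norm ((\<lambda>_. 0::real^3) s) \<le> (\<lambda>_. 0::real) s" for s by simp
        have "norm (v 1 t - v 1 0) \<le> (\<lambda>_. 0::real) t - (\<lambda>_. 0::real) 0"
          by (rule growth[of "v 1" "\<lambda>_. 0::real^3" "\<lambda>_. 0::real" "\<lambda>_. 0::real" t, OF d1 DERIV_const z that])
        thus ?thesis by (simp only: diff_self)
      qed
      show ?thesis
      proof (rule exI[of _ "0::real"], intro conjI order_refl, rule exI[of _ "1::real"], intro conjI zero_less_one ballI allI impI)
        fix j :: nat and t :: real assume j: "j \<in> {1..Suc i}" and t: "0 \<le> t"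
        have j1: "j = 1" using j True by simp
        show "norm (v j t - v 1 0) \<le> 0 * exp (- 1 * t)" unfolding j1 using v1c[OF t] by (simp only: mult_zero_left)
      qed
    next
      case False
      define n where "n = Suc i"
      have nk: "n \<in> {2..k}" "n \<in> {1..k}" using False Suc.prems by (auto simp: n_def)
      obtain M \<gamma> where Mg: "M \<ge> 0" "\<gamma> > 0" "\<And>t. t \<ge> 0 \<Longrightarrow> norm (v n t - v 1 0) \<le> M * exp (-\<gamma>*t)"
      proof -
        have "\<exists>M\<ge>0. \<exists>\<gamma>>0. \<forall>t\<ge>0. norm (v n t - v 1 0) \<le> M * exp (-\<gamma>*t)"
        proof (rule step[where n=n and L=L and H=H and \<beta>=\<beta> and C=C and B=B and x=x and v=v, OF H beta hL(1)[OF nk(2)] hL(3)[OF nk(1)] _ vdot[OF nk(2)] CB(1,2)])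
          show "\<And>i t. i \<in> {1..n} \<Longrightarrow> 0 \<le> t \<Longrightarrow> (x i has_vector_derivative v i t) (at t within {0..})"
            using xdot nk by auto
          show "\<And>j t. j \<in> {1..<n} \<Longrightarrow> 0 \<le> t \<Longrightarrow> norm (v j t - v 1 0) \<le> C * exp (-B*t)"
            using CB(3) by (auto simp: n_def)
        qed
        thus ?thesis using that by blast
      qed
      show ?thesis
      proof (rule exI[of _ "max C M"], intro conjI, use CB in simp, rule exI[of _ "min B \<gamma>"],
             intro conjI ballI allI impI, use CB Mg in simp)
        fix j :: nat and t :: real assume j: "j \<in> {1..Suc i}" and t: "0 \<le> t"
        show "norm (v j t - v 1 0) \<le> max C M * exp (- min B \<gamma> * t)"
        proof (cases "j = Suc i")
          case True
          hence "norm (v j t - v 1 0) \<le> M * exp (-\<gamma>*t)" using Mg(3)[OF t] by (simp add: n_def)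
          also have "\<dots> \<le> max C M * exp (- min B \<gamma> * t)" by (rule expbound[OF Mg(1) _ _ t]) auto
          finally show ?thesis .
        next
          case False
          hence "j \<in> {1..i}" using j by auto
          hence "norm (v j t - v 1 0) \<le> C * exp (-B*t)" using CB(3)[OF _ t] by blast
          also have "\<dots> \<le> max C M * exp (- min B \<gamma> * t)" by (rule expbound[OF CB(1) _ _ t]) auto
          finally show ?thesis .
        qed
      qed
    qed
  qed
  obtain C B where CB: "C \<ge> 0" "B > 0"
      "\<And>j t. j\<in>{1..k} \<Longrightarrow> t \<ge> 0 \<Longrightarrow> norm (v j t - v 1 0) \<le> C * exp (-B*t)"
    using Q[of k] by auto
  show ?thesis
  proof (rule exI[of _ B], intro conjI, rule CB(2), rule exI[of _ "2*C"], intro allI impI ballI)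
    fix t :: real and i j assume t: "t > 0" and ij: "i \<in> {1..k}" "j \<in> {1..k}"
    have "v i t - v j t = (v i t - v 1 0) - (v j t - v 1 0)" by simp
    hence "norm (v i t - v j t) \<le> norm (v i t - v 1 0) + norm (v j t - v 1 0)"
      by (metis norm_triangle_ineq4)
    also have "\<dots> \<le> C * exp (-B*t) + C * exp (-B*t)" using CB(3)[OF ij(1)] CB(3)[OF ij(2)] t
      by (intro add_mono) auto
    finally show "norm (v i t - v j t) \<le> 2 * C * exp (- B * t)" by simp
  qed
qed


end
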